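(* Let $\delta_{\max}\approx0.453$ be the positive real root of $\delta^3+2\delta-1$ and define $\rho:[0,\delta_{\max}]\to\mathbb{R}$ by $\rho(\delta)=-\frac{2\delta^2+3}{2}+\frac{\sqrt{4\delta^2+4\delta+9}}{2}$. Then $\rho$ attains a maximum value $r_{\max}$ on $[0,\delta_{\max}]$ (numerically $r_{\max}\approx 0.0386$), and $r_{\max}\le r_{\mathrm{bif}}(-1)$.
   Context: $f_c(z)=z^2+c$, extended to $\widehat{\mathbb{C}}$ by $f_c(\infty)=\infty$. For $c\in\mathbb{C}$, $r\ge0$, $G_{c,r}$ is the semigroup under composition generated by $\{f_{c'}:|c'-c|\le r\}$. A minimal set of a polynomial semigroup $G$ is a minimal element, with respect to inclusion, of the family of non-empty compact $L\subset\widehat{\mathbb{C}}$ with $g(L)\subset L$ for all $g\in G$; it is planar if $\infty\notin L$. The bifurcation radius $r_{\mathrm{bif}}(c)$ is the supremum of those $r\ge0$ for which $G_{c,r}$ has a planar minimal set (equivalently the infimum of those $r\ge0$ for which $G_{c,r}$ has no planar minimal set); by prior work this value is attained and $G_{c,r}$ has a planar minimal set iff $r\le r_{\mathrm{bif}}(c)$. *)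

theory Defs
  imports "HOL-Analysis.Analysis" "HOL-Library.Extended_Real"
begin

definition fq :: "complex \<Rightarrow> complex \<Rightarrow> complex" where
  "fq c z = z^2 + c"

inductive_set gen_semigroup :: "('a \<Rightarrow> 'a) set \<Rightarrow> ('a \<Rightarrow> 'a) set"
  for S :: "('a \<Rightarrow> 'a) set" where
  gen: "g \<in> S \<Longrightarrow> g \<in> gen_semigroup S"
| comp: "g \<in> gen_semigroup S \<Longrightarrow> h \<in> gen_semigroup S \<Longrightarrow> g \<circ> h \<in> gen_semigroup S"

definition G_semigroup :: "complex \<Rightarrow> real \<Rightarrow> (complex \<Rightarrow> complex) set" where
  "G_semigroup c r = gen_semigroup {fq c' | c'. cmod (c' - c) \<le> r}"

definition forward_invariant :: "('a \<Rightarrow> 'a) set \<Rightarrow> 'a set \<Rightarrow> bool" where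
  "forward_invariant G L \<longleftrightarrow> (\<forall>g\<in>G. g ` L \<subseteq> L)"

text \<open>A planar minimal set: a nonempty compact invariant subset of the plane which is
  minimal w.r.t. inclusion among nonempty compact invariant subsets of the Riemann sphere.
  Any such subset of a planar set is itself planar, so only planar competitors matter.\<close>
definition planar_minimal_set :: "(complex \<Rightarrow> complex) set \<Rightarrow> complex set \<Rightarrow> bool" where
  "planar_minimal_set G L \<longleftrightarrow>
     L \<noteq> {} \<and> compact L \<and> forward_invariant G L \<and>
     (\<forall>K. K \<noteq> {} \<and> compact K \<and> forward_invariant G K \<and> K \<subseteq> L \<longrightarrow> K = L)"

definition r_bif :: "complex \<Rightarrow> ereal" where
  "r_bif c = Sup {ereal r | r. r \<ge> 0 \<and> (\<exists>L. planar_minimal_set (G_semigroup c r) L)}"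

definition delta_max :: real where
  "delta_max = (THE d. d > 0 \<and> d^3 + 2*d - 1 = 0)"

definition rho :: "real \<Rightarrow> real" where
  "rho d = - (2*d^2 + 3) / 2 + sqrt (4*d^2 + 4*d + 9) / 2"

end

theory Submission
  imports Defs
begin

lemma gen_semigroup_inv:
  assumes "\<And>g. g \<in> S \<Longrightarrow> g ` L \<subseteq> L" and "h \<in> gen_semigroup S"
  shows "h ` L \<subseteq> L"
  using assms(2)
proof (induction rule: gen_semigroup.induct)
  case (gen g) then show ?case using assms(1) by blast
next
  case (comp g h) then show ?case by (auto simp: image_comp[symmetric])
qed

lemma exists_minimal:
  fixes L :: "complex set"
  assumes L: "L \<noteq> {}" "compact L" "forward_invariant G L"
  shows "\<exists>M. planar_minimal_set G M"
proof -
  define A where "A = {K. K \<noteq> {} \<and> compact K \<and> forward_invariant G K \<and> K \<subseteq> L}"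
  define P where "P = (\<lambda>a b::complex set. b \<subseteq> a)"
  have po: "partial_order_on A (relation_of P A)"
    by (rule partial_order_on_relation_ofI) (auto simp: P_def)
  have ch: "\<exists>u \<in> A. \<forall>a \<in> C. P a u" if C: "C \<in> Chains (relation_of P A)" for C
  proof -
    have CA: "C \<subseteq> A" using Chains_relation_of[OF C] .
    have comp: "\<And>a b. a \<in> C \<Longrightarrow> b \<in> C \<Longrightarrow> a \<subseteq> b \<or> b \<subseteq> a"
      using C unfolding Chains_def relation_of_def P_def by auto
    define u where "u = L \<inter> \<Inter>C"
    have ne: "u \<noteq> {}" unfolding u_def
    proof (rule compact_imp_fip[OF L(2)])
      show "closed T" if "T \<in> C" for T using that CA by (auto simp: A_def compact_imp_closed)
    next
      fix F' assume F': "finite F'" "F' \<subseteq> C"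
      show "L \<inter> \<Inter>F' \<noteq> {}"
      proof (cases "F' = {}")
        case True then show ?thesis using L by simp
      next
        case False
        have "subset.chain UNIV F'" unfolding subset_chain_def using F' comp by blast
        then have "\<Inter>F' \<in> F'" using Inter_in_chain F' False by blast
        then have "\<Inter>F' \<in> A" using F' CA by blast
        then show ?thesis by (auto simp: A_def)
      qed
    qed
    have "closed (\<Inter>C)"
    proof (intro closed_Inter ballI)
      fix T assume "T \<in> C"
      then have "T \<in> A" by (rule subsetD[OF CA])
      then have "compact T" unfolding A_def by simp
      then show "closed T" by (rule compact_imp_closed)
    qed
    then have cu: "compact u" unfolding u_def by (rule compact_Int_closed[OF L(2)])
    have iu: "forward_invariant G u"
      unfolding forward_invariant_def u_def
    proof
      fix g assume g: "g \<in> G"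
      have "g ` L \<subseteq> L" using L(3) g by (auto simp: forward_invariant_def)
      moreover have "g ` K \<subseteq> K" if "K \<in> C" for K using that CA g by (auto simp: A_def forward_invariant_def)
      ultimately show "g ` (L \<inter> \<Inter>C) \<subseteq> L \<inter> \<Inter>C" by blast
    qed
    have "u \<in> A" using ne cu iu by (auto simp: A_def u_def)
    moreover have "\<forall>a \<in> C. P a u" by (auto simp: P_def u_def)
    ultimately show ?thesis by blast
  qed
  obtain m where m: "m \<in> A" "\<forall>a \<in> A. P m a \<longrightarrow> a = m"
    using predicate_Zorn[OF po ch] by blast
  have "planar_minimal_set G m"
    unfolding planar_minimal_set_def
  proof (intro conjI allI impI)
    show "m \<noteq> {}" "compact m" "forward_invariant G m" using m(1) by (auto simp: A_def)
  next
    fix K assume K: "K \<noteq> {} \<and> compact K \<and> forward_invariant G K \<and> K \<subseteq> m"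
    then have "K \<in> A" using m(1) by (auto simp: A_def)
    then show "K = m" using m(2) K by (auto simp: P_def)
  qed
  then show ?thesis by blast
qed

lemma delta_max_pos: "delta_max > 0"
proof -
  define p where "p = (\<lambda>d::real. d^3 + 2*d - 1)"
  have "\<exists>d. 0 \<le> d \<and> d \<le> 1 \<and> p d = 0"
    by (rule IVT) (auto simp: p_def intro!: continuous_intros)
  then obtain d where d: "0 \<le> d" "d \<le> 1" "p d = 0" by blast
  have "d \<noteq> 0" using d(3) by (auto simp: p_def)
  then have d0: "d > 0" using d(1) by simp
  have mono: "p x < p y" if "x < y" "x \<ge> 0" for x y
  proof -
    have "x^3 \<le> y^3" using that by (intro power_mono) auto
    then show ?thesis unfolding p_def using that by linarith
  qed
  have uniq: "e = d" if "e > 0" "p e = 0" for e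
    using mono[of e d] mono[of d e] that d0 d by (cases e d rule: linorder_cases) auto
  have "delta_max = d"
    unfolding delta_max_def
  proof (rule the_equality)
    show "d > 0 \<and> d^3 + 2*d - 1 = 0" using d0 d(3) unfolding p_def by simp
  next
    fix e :: real assume e: "e > 0 \<and> e^3 + 2*e - 1 = 0"
    then have "p e = 0" unfolding p_def by simp
    then show "e = d" using uniq e by blast
  qed
  then show ?thesis using d0 by simp
qed

lemma invariant_discs:
  fixes d :: real
  assumes d: "d \<ge> 0" and r: "rho d \<ge> 0"
  defines "L \<equiv> cball 0 d \<union> cball (-1) (d^2 + rho d)"
  shows "forward_invariant (G_semigroup (-1) (rho d)) L"
proof -
  define r where "r = rho d"
  define b where "b = d^2 + r"
  define s where "s = sqrt (4*d^2 + 4*d + 9)"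
  have s2: "s^2 = 4*d^2 + 4*d + 9" unfolding s_def
    by (rule real_sqrt_pow2) (use d in auto)
  have bs: "b = (s - 3)/2" unfolding b_def r_def rho_def s_def by (simp add: field_simps)
  have key: "b^2 + 2*b + r = d"
  proof -
    have "b^2 + 3*b = d^2 + d" unfolding bs using s2 by (simp add: field_simps power2_eq_square)
    then show ?thesis unfolding b_def by (simp add: algebra_simps)
  qed
  have b0: "b \<ge> 0" using d r by (simp add: b_def r_def)
  have gen: "fq c ` L \<subseteq> L" if c: "cmod (c - (-1)) \<le> r" for c
  proof
    fix x assume "x \<in> fq c ` L"
    then obtain z where z: "z \<in> L" "x = z^2 + c" by (auto simp: fq_def)
    show "x \<in> L"
    proof (cases "cmod z \<le> d")
      case True
      have "cmod (x + 1) = cmod (z^2 + (c + 1))" using z by (simp add: algebra_simps)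
      also have "\<dots> \<le> cmod (z^2) + cmod (c+1)" by (rule norm_triangle_ineq)
      also have "\<dots> \<le> d^2 + r" using True c by (auto simp: norm_power intro!: add_mono power_mono)
      finally show ?thesis unfolding L_def by (auto simp: dist_norm r_def norm_minus_commute)
    next
      case False
      then have zw: "cmod (z + 1) \<le> b" using z(1) by (auto simp: L_def dist_norm b_def r_def norm_minus_commute)
      define w where "w = z + 1"
      have "x = w^2 - 2*w + (c + 1)" using z by (simp add: w_def power2_eq_square algebra_simps)
      then have "cmod x \<le> cmod (w^2 - 2*w) + cmod (c+1)"
        using norm_triangle_ineq by simp
      also have "\<dots> \<le> cmod (w^2) + cmod (2*w) + cmod (c+1)"
        using norm_triangle_ineq4[of "w^2" "2*w"] by simp
      also have "\<dots> \<le> b^2 + 2*b + r"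
      proof -
        have zw': "cmod w \<le> b" using zw by (simp add: w_def)
        have "cmod (w^2) \<le> b^2" unfolding norm_power by (rule power_mono[OF zw']) simp
        moreover have "cmod (2*w) \<le> 2*b" using zw' by (simp add: norm_mult)
        ultimately show ?thesis using c by simp
      qed
      finally show ?thesis using key unfolding L_def by (auto simp: dist_norm)
    qed
  qed
  show ?thesis
    unfolding forward_invariant_def G_semigroup_def
  proof
    fix g assume "g \<in> gen_semigroup {fq c' |c'. cmod (c' - - 1) \<le> rho d}"
    then show "g ` L \<subseteq> L"
      by (rule gen_semigroup_inv[rotated]) (use gen in \<open>auto simp: r_def\<close>)
  qed
qed

theorem theorem4p18:
  shows "\<exists>r_max. (\<exists>d\<in>{0..delta_max}. rho d = r_max) \<and> (\<forall>d\<in>{0..delta_max}. rho d \<le> r_max)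
           \<and> ereal r_max \<le> r_bif (-1)"
proof -
  have ne: "{0..delta_max} \<noteq> {}" using delta_max_pos by simp
  have cont: "continuous_on {0..delta_max} rho" unfolding rho_def by (intro continuous_intros) simp_all
  obtain d where d: "d \<in> {0..delta_max}" "\<forall>y\<in>{0..delta_max}. rho y \<le> rho d"
    using continuous_attains_sup[OF compact_Icc ne cont] by blast
  have "rho 0 = 0" by (simp add: rho_def)
  moreover have "rho 0 \<le> rho d"
  proof -
    have "(0::real) \<in> {0..delta_max}" using delta_max_pos by simp
    then show ?thesis using d(2) by blast
  qed
  ultimately have r0: "rho d \<ge> 0" by simp
  define L :: "complex set" where "L = cball 0 d \<union> cball (-1) (d^2 + rho d)"
  have inv: "forward_invariant (G_semigroup (-1) (rho d)) L"
    unfolding L_def by (rule invariant_discs) (use d r0 in auto)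
  have "L \<noteq> {}" "compact L" using d by (auto simp: L_def)
  then obtain M where "planar_minimal_set (G_semigroup (-1) (rho d)) M"
    using exists_minimal inv by blast
  then have "ereal (rho d) \<in> {ereal r | r. r \<ge> 0 \<and> (\<exists>L. planar_minimal_set (G_semigroup (-1) r) L)}"
    using r0 by blast
  then have "ereal (rho d) \<le> r_bif (-1)" unfolding r_bif_def by (rule Sup_upper)
  then show ?thesis using d by blast
qed

end
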